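(* For every $0<\alpha<1$ there exists $n_0$ such that the following holds. Let $G$ be a digraph on $n\ge n_0$ vertices with $\delta^0(G)\ge\alpha n$ and let $M$ be any matching in the complete graph on $V(G)$. Then there is a set $S\subseteq V(G)$ such that: (i) $n/3\le|S|\le 2n/3$; (ii) every $x\in V(G)$ satisfies $d^+_S(x),d^-_S(x),d^+_{\overline S}(x),d^-_{\overline S}(x)\ge\alpha n/6$, where $\overline S=V(G)\setminus S$; (iii) $S$ does not separate $M$.
   Context: $\delta^0(G)=\min\{\delta^+(G),\delta^-(G)\}$. For $S\subseteq V(G)$, $d^\pm_S(x)=|N^\pm_G(x)\cap S|$. A set $S$ separates a matching $M$ (in the complete graph on $V(G)$) if some edge of $M$ has exactly one endvertex in $S$. *)

theory Defs
  imports Complex_Main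
begin

definition digraph :: "'a set \<Rightarrow> ('a \<times> 'a) set \<Rightarrow> bool" where
  "digraph V E \<longleftrightarrow> finite V \<and> E \<subseteq> V \<times> V \<and> (\<forall>x. (x, x) \<notin> E)"

definition outdeg_in :: "('a \<times> 'a) set \<Rightarrow> 'a set \<Rightarrow> 'a \<Rightarrow> nat" where
  "outdeg_in E S x = card {y \<in> S. (x, y) \<in> E}"

definition indeg_in :: "('a \<times> 'a) set \<Rightarrow> 'a set \<Rightarrow> 'a \<Rightarrow> nat" where
  "indeg_in E S x = card {y \<in> S. (y, x) \<in> E}"

text \<open>Minimum semidegree delta^0(G) = min(delta^+, delta^-) (for nonempty V).\<close>
definition min_semidegree :: "'a set \<Rightarrow> ('a \<times> 'a) set \<Rightarrow> nat" where
  "min_semidegree V E = min (Min ((outdeg_in E V) ` V)) (Min ((indeg_in E V) ` V))"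

definition is_matching_on :: "'a set \<Rightarrow> 'a set set \<Rightarrow> bool" where
  "is_matching_on V M \<longleftrightarrow> (\<forall>e \<in> M. e \<subseteq> V \<and> card e = 2) \<and>
     (\<forall>e \<in> M. \<forall>f \<in> M. e \<noteq> f \<longrightarrow> e \<inter> f = {})"

definition separates :: "'a set \<Rightarrow> 'a set set \<Rightarrow> bool" where
  "separates S M \<longleftrightarrow> (\<exists>e \<in> M. card (e \<inter> S) = 1)"

end

theory Submission
  imports Defs "HOL-Probability.Probability"
begin


lemma part_card:
  assumes "finite U" "\<forall>u\<in>U. finite u" "\<forall>u\<in>U. \<forall>u'\<in>U. u \<noteq> u' \<longrightarrow> u \<inter> u' = {}"
  shows "card (N \<inter> \<Union>{u\<in>U. P u}) = (\<Sum>u\<in>U. if P u then card (N \<inter> u) else 0)"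
proof -
  have eq: "N \<inter> \<Union>{u\<in>U. P u} = (\<Union>u\<in>{u\<in>U. P u}. N \<inter> u)" by auto
  have "card (N \<inter> \<Union>{u\<in>U. P u}) = card (\<Union>u\<in>{u\<in>U. P u}. N \<inter> u)" by (simp only: eq)
  also have "\<dots> = (\<Sum>u\<in>{u\<in>U. P u}. card (N \<inter> u))"
    by (rule card_UN_disjoint) (use assms in auto)
  also have "\<dots> = (\<Sum>u\<in>U. if P u then card (N \<inter> u) else 0)"
    using assms(1) by (simp add: sum.inter_filter)
  finally show ?thesis .
qed

lemma units_props:
  fixes V :: "'a set" and M :: "'a set set"
  assumes fin: "finite V" and m: "is_matching_on V M"
  defines "U \<equiv> M \<union> (\<lambda>v. {v}) ` (V - \<Union>M)"
  shows "finite U" "\<forall>u\<in>U. finite u \<and> u \<subseteq> V \<and> u \<noteq> {} \<and> card u \<le> 2"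
    "\<forall>u\<in>U. \<forall>u'\<in>U. u \<noteq> u' \<longrightarrow> u \<inter> u' = {}" "\<Union>U = V" "M \<subseteq> U" "card U \<le> card V"
proof -
  have MV: "\<forall>e\<in>M. e \<subseteq> V \<and> card e = 2" and Md: "\<forall>e\<in>M. \<forall>f\<in>M. e \<noteq> f \<longrightarrow> e \<inter> f = {}"
    using m unfolding is_matching_on_def by auto
  have "M \<subseteq> Pow V" using MV by auto
  hence "finite M" using fin by (meson finite_Pow_iff finite_subset)
  thus fU: "finite U" unfolding U_def using fin by auto
  show P: "\<forall>u\<in>U. finite u \<and> u \<subseteq> V \<and> u \<noteq> {} \<and> card u \<le> 2"
    unfolding U_def using MV fin by (auto intro: finite_subset)
  show D: "\<forall>u\<in>U. \<forall>u'\<in>U. u \<noteq> u' \<longrightarrow> u \<inter> u' = {}"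
    unfolding U_def using Md by auto
  show UV: "\<Union>U = V" unfolding U_def using MV by auto
  show "M \<subseteq> U" unfolding U_def by auto
  have "card V = card (\<Union>U)" using UV by simp
  also have "\<dots> = (\<Sum>u\<in>U. card u)" using fU P D by (intro card_Union_disjoint) (auto simp: pairwise_def disjnt_def)
  also have "\<dots> \<ge> (\<Sum>u\<in>U. 1)" using P by (intro sum_mono) (auto simp: Suc_le_eq card_gt_0_iff)
  finally show "card U \<le> card V" by simp
qed



lemma hoeff_coins:
  fixes U :: "'b set" and w :: "'b \<Rightarrow> real"
  assumes fin: "finite U" and ne: "U \<noteq> {}" and wb: "\<And>u. u\<in>U \<Longrightarrow> 0 \<le> w u \<and> w u \<le> 2" and eps: "\<epsilon> \<ge> 0"
  shows "measure_pmf.prob (Pi_pmf U False (\<lambda>_. bernoulli_pmf (1/2)))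
           {f. (\<Sum>u\<in>U. if f u then w u else 0) \<le> (\<Sum>u\<in>U. w u)/2 - \<epsilon>} \<le> exp (-2*\<epsilon>\<^sup>2/(4*card U))"
    and "measure_pmf.prob (Pi_pmf U False (\<lambda>_. bernoulli_pmf (1/2)))
           {f. (\<Sum>u\<in>U. if f u then w u else 0) \<ge> (\<Sum>u\<in>U. w u)/2 + \<epsilon>} \<le> exp (-2*\<epsilon>\<^sup>2/(4*card U))"
proof -
  define coins where "coins = Pi_pmf U False (\<lambda>_. bernoulli_pmf (1/2::real))"
  have E: "measure_pmf.expectation coins (\<lambda>f. if f u then w u else 0) = w u / 2" if "u \<in> U" for u
  proof -
    have "measure_pmf.expectation coins (\<lambda>f. if f u then w u else 0) =
        measure_pmf.expectation (map_pmf (\<lambda>f. f u) coins) (\<lambda>b. if b then w u else 0)"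
      by simp
    also have "map_pmf (\<lambda>f. f u) coins = bernoulli_pmf (1/2)"
      using that fin by (simp add: coins_def Pi_pmf_component)
    also have "measure_pmf.expectation (bernoulli_pmf (1/2)) (\<lambda>b. if b then w u else 0) = w u / 2"
      by simp
    finally show ?thesis .
  qed
  interpret H: Hoeffding_ineq "measure_pmf coins" U "\<lambda>u f. if f u then w u else 0" "\<lambda>_. 0" "\<lambda>_. 2" "(\<Sum>u\<in>U. w u)/2"
  proof unfold_locales
    show "finite U" by fact
    show "prob_space.indep_vars (measure_pmf coins) (\<lambda>_. borel) (\<lambda>u f. if f u then w u else 0) U"
      unfolding coins_def
      by (intro prob_space.indep_vars_compose2[OF _ indep_vars_Pi_pmf[OF fin]])
         (auto simp: measure_pmf.prob_space_axioms)
    show "AE x in measure_pmf coins. (if x i then w i else 0) \<in> {0..2}" if "i \<in> U" for i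
      using wb[OF that] by auto
    have "(\<Sum>u\<in>U. w u)/2 = (\<Sum>u\<in>U. measure_pmf.expectation coins (\<lambda>f. if f u then w u else 0))"
      by (simp add: E sum_divide_distrib)
    then show "(\<Sum>u\<in>U. w u)/2 \<equiv> (\<Sum>u\<in>U. measure_pmf.expectation coins (\<lambda>f. if f u then w u else 0))"
      by simp
  qed
  have pos: "(\<Sum>i\<in>U. (2 - 0::real)\<^sup>2) = 4 * card U" by simp
  have cp: "(\<Sum>i\<in>U. (2 - 0::real)\<^sup>2) > 0" using fin ne by (simp add: card_gt_0_iff)
  show "measure_pmf.prob (Pi_pmf U False (\<lambda>_. bernoulli_pmf (1/2)))
           {f. (\<Sum>u\<in>U. if f u then w u else 0) \<le> (\<Sum>u\<in>U. w u)/2 - \<epsilon>} \<le> exp (-2*\<epsilon>\<^sup>2/(4*card U))"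
    using H.Hoeffding_ineq_le[OF eps cp] unfolding pos coins_def by simp
  show "measure_pmf.prob (Pi_pmf U False (\<lambda>_. bernoulli_pmf (1/2)))
           {f. (\<Sum>u\<in>U. if f u then w u else 0) \<ge> (\<Sum>u\<in>U. w u)/2 + \<epsilon>} \<le> exp (-2*\<epsilon>\<^sup>2/(4*card U))"
    using H.Hoeffding_ineq_ge[OF eps cp] unfolding pos coins_def by simp
qed



lemma n0_exists:
  fixes c :: real assumes c: "c > 0"
  shows "\<exists>n0::nat. \<forall>n\<ge>n0. n \<ge> 1 \<longrightarrow> (2 + 4 * real n) * exp (- c * real n) < 1"
proof (intro exI allI impI)
  fix n :: nat assume n0: "n \<ge> nat \<lceil>12 / c\<^sup>2\<rceil>" and n1: "n \<ge> 1"
  have "real n \<ge> 12 / c\<^sup>2" using n0 by linarith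
  hence "c\<^sup>2 * real n \<ge> 12" using c by (simp add: field_simps)
  hence A: "c\<^sup>2 * real n * real n \<ge> 12 * real n" by (intro mult_right_mono) auto
  have "exp (c * real n) \<ge> 1 + c * real n + (c * real n)\<^sup>2 / 2"
    using c by (intro exp_lower_Taylor_quadratic) auto
  moreover have B: "(c * real n)\<^sup>2 / 2 \<ge> 6 * real n" using A by (simp add: power2_eq_square algebra_simps)
  moreover have "c * real n \<ge> 0" using c by simp
  moreover have "real n \<ge> 1" using n1 by simp
  ultimately have "2 + 4 * real n < exp (c * real n)" by linarith
  thus "(2 + 4 * real n) * exp (- c * real n) < 1"
    by (simp add: exp_minus field_simps)
qed

lemma pmf_un: "measure_pmf.prob p (A \<union> B) \<le> measure_pmf.prob p A + measure_pmf.prob p B"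
  by (rule measure_subadditive) (auto simp: measure_pmf.emeasure_finite)

lemma exp_bound_mono:
  fixes k n e :: real assumes "0 < k" "k \<le> n"
  shows "exp (-2 * e\<^sup>2 / (4 * k)) \<le> exp (-2 * e\<^sup>2 / (4 * n))"
proof -
  have "e\<^sup>2 / (4 * n) \<le> e\<^sup>2 / (4 * k)" using assms by (intro divide_left_mono) auto
  thus ?thesis by simp
qed



lemma main_fixed:
  fixes V :: "nat set" and E M and \<alpha> :: real
  assumes a: "0 < \<alpha>" "\<alpha> < 1"
    and G: "digraph V E" and Vne: "V \<noteq> {}"
    and deg: "real (min_semidegree V E) \<ge> \<alpha> * real (card V)"
    and m: "is_matching_on V M"
    and small: "(2 + 4 * real (card V)) * exp (- (\<alpha>\<^sup>2/72) * real (card V)) < 1"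
  shows "\<exists>S \<subseteq> V.
              real (card V) / 3 \<le> real (card S) \<and> real (card S) \<le> 2 * real (card V) / 3 \<and>
              (\<forall>x \<in> V.
                 real (outdeg_in E S x) \<ge> \<alpha> * real (card V) / 6 \<and>
                 real (indeg_in E S x) \<ge> \<alpha> * real (card V) / 6 \<and>
                 real (outdeg_in E (V - S) x) \<ge> \<alpha> * real (card V) / 6 \<and>
                 real (indeg_in E (V - S) x) \<ge> \<alpha> * real (card V) / 6) \<and>
              \<not> separates S M"
proof -
  have finV: "finite V" and EV: "E \<subseteq> V \<times> V" using G unfolding digraph_def by auto
  define n where "n = card V"
  have npos: "n > 0" using finV Vne unfolding n_def by (simp add: card_gt_0_iff)
  define U where "U = M \<union> (\<lambda>v. {v}) ` (V - \<Union>M)"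
  note UP = units_props[OF finV m, folded U_def]
  have finU: "finite U" and Uu: "\<forall>u\<in>U. finite u \<and> u \<subseteq> V \<and> u \<noteq> {} \<and> card u \<le> 2"
    and Ud: "\<forall>u\<in>U. \<forall>u'\<in>U. u \<noteq> u' \<longrightarrow> u \<inter> u' = {}" and UV: "\<Union>U = V" and MU: "M \<subseteq> U"
    and kn: "card U \<le> n" using UP unfolding n_def by auto
  have Une: "U \<noteq> {}" using UV Vne by auto
  have kpos: "card U > 0" using finU Une by (simp add: card_gt_0_iff)
  define coins where "coins = Pi_pmf U False (\<lambda>_. bernoulli_pmf (1/2::real))"
  define sm where "sm N f = (\<Sum>u\<in>U. if f u then real (card (N \<inter> u)) else 0)" for N and f :: "nat set \<Rightarrow> bool"
  define tot where "tot N = (\<Sum>u\<in>U. real (card (N \<inter> u)))" for N :: "nat set"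
  define Sf where "Sf f = \<Union>{u\<in>U. f u}" for f :: "nat set \<Rightarrow> bool"
  have key: "real (card (N \<inter> Sf f)) = sm N f" for N f
  proof -
    have "card (N \<inter> Sf f) = (\<Sum>u\<in>U. if f u then card (N \<inter> u) else 0)"
      unfolding Sf_def using part_card[OF finU, of N f] Uu Ud by blast
    hence "real (card (N \<inter> Sf f)) = (\<Sum>u\<in>U. real (if f u then card (N \<inter> u) else 0))"
      by (simp only: of_nat_sum)
    also have "\<dots> = sm N f" unfolding sm_def by (intro sum.cong) auto
    finally show ?thesis .
  qed
  have totN: "tot N = real (card N)" if "N \<subseteq> V" for N
  proof -
    have "card (N \<inter> \<Union>{u\<in>U. True}) = (\<Sum>u\<in>U. if True then card (N \<inter> u) else 0)"
      using part_card[OF finU, of N "\<lambda>_. True"] Uu Ud by blast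
    moreover have "N \<inter> \<Union>{u\<in>U. True} = N" using UV that by auto
    ultimately show ?thesis unfolding tot_def by (simp add: of_nat_sum)
  qed
  have wb: "\<And>u. u \<in> U \<Longrightarrow> 0 \<le> real (card (N \<inter> u)) \<and> real (card (N \<inter> u)) \<le> 2" for N
  proof -
    fix u assume "u \<in> U"
    hence "card (N \<inter> u) \<le> card u" "card u \<le> 2" using Uu by (auto intro: card_mono)
    thus "0 \<le> real (card (N \<inter> u)) \<and> real (card (N \<inter> u)) \<le> 2" by simp
  qed
  define q where "q = exp (- (\<alpha>\<^sup>2/72) * real n)"
  define BL where "BL N e = {f. sm N f \<le> tot N / 2 - e}" for N e
  define BH where "BH N e = {f. sm N f \<ge> tot N / 2 + e}" for N e
  have pL: "measure_pmf.prob coins (BL N e) \<le> exp (-2*e\<^sup>2/(4*n))" if "e \<ge> 0" for N e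
  proof -
    have "measure_pmf.prob coins (BL N e) \<le> exp (-2*e\<^sup>2/(4*card U))"
      unfolding BL_def sm_def tot_def coins_def
      by (rule hoeff_coins(1)[OF finU Une wb that])
    also have "\<dots> \<le> exp (-2*e\<^sup>2/(4*n))" using exp_bound_mono[of "real (card U)" "real n" e] kpos kn by simp
    finally show ?thesis .
  qed
  have pH: "measure_pmf.prob coins (BH N e) \<le> exp (-2*e\<^sup>2/(4*n))" if "e \<ge> 0" for N e
  proof -
    have "measure_pmf.prob coins (BH N e) \<le> exp (-2*e\<^sup>2/(4*card U))"
      unfolding BH_def sm_def tot_def coins_def
      by (rule hoeff_coins(2)[OF finU Une wb that])
    also have "\<dots> \<le> exp (-2*e\<^sup>2/(4*n))" using exp_bound_mono[of "real (card U)" "real n" e] kpos kn by simp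
    finally show ?thesis .
  qed
  have e1: "exp (-2*(\<alpha>*n/3)\<^sup>2/(4*n)) \<le> q"
  proof -
    have "-2*(\<alpha>*n/3)\<^sup>2/(4*n) = - (\<alpha>\<^sup>2/18) * n" using npos by (simp add: power2_eq_square field_simps)
    also have "\<dots> \<le> - (\<alpha>\<^sup>2/72) * n" using npos by (simp add: field_simps)
    finally show ?thesis unfolding q_def by simp
  qed
  have e2: "exp (-2*(n/6)\<^sup>2/(4*n)) \<le> q"
  proof -
    have "-2*(n/6)\<^sup>2/(4*n) = - (1/72) * real n" using npos by (simp add: power2_eq_square field_simps)
    also have "\<dots> \<le> - (\<alpha>\<^sup>2/72) * n"
    proof -
      have "\<alpha>\<^sup>2 \<le> 1" using a by (simp add: abs_square_le_1)
      thus ?thesis using npos by (simp add: field_simps mult_right_mono)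
    qed
    finally show ?thesis unfolding q_def by simp
  qed
  define Out where "Out x = {y\<in>V. (x,y)\<in>E}" for x
  define In where "In x = {y\<in>V. (y,x)\<in>E}" for x
  define ea where "ea = \<alpha>*n/3"
  have ea0: "ea \<ge> 0" using a unfolding ea_def by simp
  define Bx where "Bx x = BL (Out x) ea \<union> BL (In x) ea \<union> BH (Out x) ea \<union> BH (In x) ea" for x
  define Bad where "Bad = BL V (n/6) \<union> BH V (n/6) \<union> (\<Union>x\<in>V. Bx x)"
  have pBx: "measure_pmf.prob coins (Bx x) \<le> 4 * q" for x
  proof -
    have "measure_pmf.prob coins (Bx x) \<le> measure_pmf.prob coins (BL (Out x) ea) + measure_pmf.prob coins (BL (In x) ea)
       + measure_pmf.prob coins (BH (Out x) ea) + measure_pmf.prob coins (BH (In x) ea)"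
      unfolding Bx_def
      by (meson add_mono pmf_un order_trans order_refl)
    also have "\<dots> \<le> q + q + q + q"
      using pL[OF ea0] pH[OF ea0] e1 unfolding ea_def by (meson add_mono order_trans)
    finally show ?thesis by simp
  qed
  have "measure_pmf.prob coins Bad \<le> measure_pmf.prob coins (BL V (n/6)) + measure_pmf.prob coins (BH V (n/6))
      + measure_pmf.prob coins (\<Union>x\<in>V. Bx x)"
    unfolding Bad_def
    by (meson add_mono pmf_un order_trans order_refl)
  also have "\<dots> \<le> q + q + (\<Sum>x\<in>V. measure_pmf.prob coins (Bx x))"
  proof -
    have "measure_pmf.prob coins (\<Union>x\<in>V. Bx x) \<le> (\<Sum>x\<in>V. measure_pmf.prob coins (Bx x))"
      by (rule measure_pmf.finite_measure_subadditive_finite) (use finV in auto)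
    moreover have "n/6 \<ge> 0" by simp
    ultimately show ?thesis using pL pH e2 by (meson add_mono order_trans)
  qed
  also have "\<dots> \<le> q + q + (\<Sum>x\<in>V. 4 * q)" by (intro add_mono sum_mono pBx) auto
  also have "\<dots> = (2 + 4 * real n) * q" unfolding n_def by (simp add: algebra_simps)
  also have "\<dots> < 1" using small unfolding q_def n_def by simp
  finally have "Bad \<noteq> UNIV" by auto
  then obtain f where f: "f \<notin> Bad" by auto
  define S where "S = Sf f"
  have SV: "S \<subseteq> V" unfolding S_def Sf_def using UV by auto
  have cS: "real (card S) = sm V f" using key[of V f] SV unfolding S_def by (simp add: Int_absorb1)
  have tV: "tot V = n" using totN[of V] unfolding n_def by simp
  have dOut: "real (card (Out x)) \<ge> \<alpha> * n" if "x \<in> V" for x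
  proof -
    have "min_semidegree V E \<le> outdeg_in E V x" unfolding min_semidegree_def
      using finV that by (simp add: min.coboundedI1)
    moreover have "outdeg_in E V x = card (Out x)" unfolding outdeg_in_def Out_def by simp
    ultimately show ?thesis using deg unfolding n_def by linarith
  qed
  have dIn: "real (card (In x)) \<ge> \<alpha> * n" if "x \<in> V" for x
  proof -
    have "min_semidegree V E \<le> indeg_in E V x" unfolding min_semidegree_def
      using finV that by (simp add: min.coboundedI2)
    moreover have "indeg_in E V x = card (In x)" unfolding indeg_in_def In_def by simp
    ultimately show ?thesis using deg unfolding n_def by linarith
  qed
  have finN: "finite (Out x)" "finite (In x)" "Out x \<subseteq> V" "In x \<subseteq> V" for x
    unfolding Out_def In_def using finV by auto
  have side: "real (card (N \<inter> S)) \<ge> \<alpha>*n/6 \<and> real (card (N \<inter> (V - S))) \<ge> \<alpha>*n/6"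
    if "N \<subseteq> V" "real (card N) \<ge> \<alpha>*n" "f \<notin> BL N ea" "f \<notin> BH N ea" for N
  proof -
    have t: "tot N = card N" using totN[OF that(1)] .
    have s: "real (card (N \<inter> S)) = sm N f" using key unfolding S_def by simp
    have "N \<inter> (V - S) = N - (N \<inter> S)" using that(1) by auto
    hence "card (N \<inter> (V - S)) = card N - card (N \<inter> S)"
      using that(1) finV by (simp add: card_Diff_subset finite_subset)
    moreover have "card (N \<inter> S) \<le> card N" using that(1) finV by (intro card_mono) (auto intro: finite_subset)
    ultimately have d: "real (card (N \<inter> (V - S))) = real (card N) - real (card (N \<inter> S))" by simp
    show ?thesis using that(2-4) t s d unfolding BL_def BH_def ea_def by auto
  qed
  show ?thesis
  proof (intro exI[of _ S] conjI ballI SV)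
    show "real (card V) / 3 \<le> real (card S)" using f cS tV unfolding Bad_def BL_def n_def by auto
    show "real (card S) \<le> 2 * real (card V) / 3" using f cS tV unfolding Bad_def BH_def n_def by auto
    fix x assume x: "x \<in> V"
    have fx: "f \<notin> Bx x" using f x unfolding Bad_def by auto
    have o1: "outdeg_in E S x = card (Out x \<inter> S)" unfolding outdeg_in_def Out_def
      using SV by (intro arg_cong[where f=card]) auto
    have o2: "outdeg_in E (V - S) x = card (Out x \<inter> (V - S))" unfolding outdeg_in_def Out_def
      by (intro arg_cong[where f=card]) auto
    have i1: "indeg_in E S x = card (In x \<inter> S)" unfolding indeg_in_def In_def
      using SV by (intro arg_cong[where f=card]) auto
    have i2: "indeg_in E (V - S) x = card (In x \<inter> (V - S))" unfolding indeg_in_def In_def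
      by (intro arg_cong[where f=card]) auto
    have so: "real (card (Out x \<inter> S)) \<ge> \<alpha>*n/6 \<and> real (card (Out x \<inter> (V - S))) \<ge> \<alpha>*n/6"
      by (rule side[OF finN(3) dOut[OF x]]) (use fx in \<open>auto simp: Bx_def\<close>)
    have si: "real (card (In x \<inter> S)) \<ge> \<alpha>*n/6 \<and> real (card (In x \<inter> (V - S))) \<ge> \<alpha>*n/6"
      by (rule side[OF finN(4) dIn[OF x]]) (use fx in \<open>auto simp: Bx_def\<close>)
    show "real (outdeg_in E S x) \<ge> \<alpha> * real (card V) / 6" using so o1 unfolding n_def by simp
    show "real (indeg_in E S x) \<ge> \<alpha> * real (card V) / 6" using si i1 unfolding n_def by simp
    show "real (outdeg_in E (V - S) x) \<ge> \<alpha> * real (card V) / 6" using so o2 unfolding n_def by simp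
    show "real (indeg_in E (V - S) x) \<ge> \<alpha> * real (card V) / 6" using si i2 unfolding n_def by simp
  next
    show "\<not> separates S M" unfolding separates_def
    proof
      assume "\<exists>e\<in>M. card (e \<inter> S) = 1"
      then obtain e where e: "e \<in> M" "card (e \<inter> S) = 1" by blast
      have eU: "e \<in> U" using e MU by auto
      have ce: "card e = 2" using e m unfolding is_matching_on_def by auto
      show False
      proof (cases "f e")
        case True
        hence "e \<subseteq> S" unfolding S_def Sf_def using eU by auto
        hence "e \<inter> S = e" by auto
        thus False using e ce by simp
      next
        case False
        have "e \<inter> S = {}"
        proof (rule ccontr)
          assume "e \<inter> S \<noteq> {}"
          then obtain y u where "y \<in> e" "y \<in> u" "u \<in> U" "f u" unfolding S_def Sf_def by auto
          moreover have "u \<noteq> e" using False \<open>f u\<close> by auto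
          ultimately show False using Ud eU by blast
        qed
        thus False using e by simp
      qed
    qed
  qed
qed

theorem lemma3p5:
  fixes \<alpha> :: real
  assumes "0 < \<alpha>" and "\<alpha> < 1"
  shows "\<exists>n0::nat. \<forall>(V::nat set) E M.
           digraph V E \<and> card V \<ge> n0 \<and> V \<noteq> {} \<and>
           real (min_semidegree V E) \<ge> \<alpha> * real (card V) \<and>
           is_matching_on V M \<longrightarrow>
           (\<exists>S \<subseteq> V.
              real (card V) / 3 \<le> real (card S) \<and> real (card S) \<le> 2 * real (card V) / 3 \<and>
              (\<forall>x \<in> V.
                 real (outdeg_in E S x) \<ge> \<alpha> * real (card V) / 6 \<and>
                 real (indeg_in E S x) \<ge> \<alpha> * real (card V) / 6 \<and>
                 real (outdeg_in E (V - S) x) \<ge> \<alpha> * real (card V) / 6 \<and>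
                 real (indeg_in E (V - S) x) \<ge> \<alpha> * real (card V) / 6) \<and>
              \<not> separates S M)"
proof -
  have c: "\<alpha>\<^sup>2/72 > 0" using assms by simp
  obtain n0 where n0: "\<forall>n\<ge>n0. n \<ge> 1 \<longrightarrow> (2 + 4 * real n) * exp (- (\<alpha>\<^sup>2/72) * real n) < 1"
    using n0_exists[OF c] by blast
  show ?thesis
  proof (intro exI[of _ n0] allI impI)
    fix V :: "nat set" and E M
    assume h: "digraph V E \<and> card V \<ge> n0 \<and> V \<noteq> {} \<and>
           real (min_semidegree V E) \<ge> \<alpha> * real (card V) \<and> is_matching_on V M"
    hence "finite V" unfolding digraph_def by auto
    hence "card V \<ge> 1" using h by (simp add: Suc_le_eq card_gt_0_iff)
    hence small: "(2 + 4 * real (card V)) * exp (- (\<alpha>\<^sup>2/72) * real (card V)) < 1" using n0 h by blast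
    show "\<exists>S \<subseteq> V.
              real (card V) / 3 \<le> real (card S) \<and> real (card S) \<le> 2 * real (card V) / 3 \<and>
              (\<forall>x \<in> V.
                 real (outdeg_in E S x) \<ge> \<alpha> * real (card V) / 6 \<and>
                 real (indeg_in E S x) \<ge> \<alpha> * real (card V) / 6 \<and>
                 real (outdeg_in E (V - S) x) \<ge> \<alpha> * real (card V) / 6 \<and>
                 real (indeg_in E (V - S) x) \<ge> \<alpha> * real (card V) / 6) \<and>
              \<not> separates S M"
      using main_fixed[OF assms _ _ _ _ small] h by blast
  qed
qed

end
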